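(* Let $G_1$ and $G_2$ be bi-fuzzy automata with event sets $\hat\Sigma_1,\hat\Sigma_2$ over crisp state sets of sizes $m$ and $n$, and let $G_1\|G_2$ be their parallel composition. Then for every $s\in(\hat\Sigma_1\cup\hat\Sigma_2)^*$, $$L_{G_1\|G_2}(s)=L_{G_1}(s)\sqcap L_{G_2}(s),$$ where $L_{G_i}(s)$ is computed by letting each event not in $\hat\Sigma_i$ act in $G_i$ as the identity matrix $I_i$.
   Context: $NCFD$ is the set of normal convex type-1 fuzzy sets $\mu:[0,1]\to[0,1]$ ($\max_u\mu(u)=1$, and $\mu(u_j)\ge\min\{\mu(u_i),\mu(u_k)\}$ for $u_i\le u_j\le u_k$); $a/u_0$ denotes the fuzzy set with value $a$ at $u_0$ and $0$ elsewhere. Operations: $(\mu_1\sqcup\mu_2)(v)=\sup\{\min(\mu_1(u),\mu_2(w)):\max(u,w)=v\}$, $(\mu_1\sqcap\mu_2)(v)=\sup\{\min(\mu_1(u),\mu_2(w)):\min(u,w)=v\}$. Matrix composition: $(R\odot S)(x,z)=\bigsqcup_y[R(x,y)\sqcap S(y,z)]$. Bi-fuzzy tensor: for $\hat A=[\tilde a_{ij}]$ ($k\times m$), $\hat B$ ($p\times s$), $\hat A\otimes\hat B$ is the $kp\times ms$ block matrix with $(i,j)$ block $[\tilde a_{ij}\sqcap\tilde b_{pq}]_{p,q}$. A bi-fuzzy automaton $G=(\hat X,\hat\Sigma,\delta,\hat x_0,\hat x_m)$ over a crisp state set of size $n$ has bi-fuzzy states = row vectors in $NCFD^n$, events $\sigma\in\hat\Sigma$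 given by $n\times n$ matrices over $NCFD$, $\delta(\hat x,\sigma)=\hat x\odot\sigma$, initial and final bi-fuzzy states $\hat x_0,\hat x_m\in NCFD^n$. Its generated language $L_G:\hat\Sigma^*\to NCFD$ is $L_G(\epsilon)=1/1$ and $L_G(\sigma_1\cdots\sigma_k)=\hat x_0\odot\sigma_1\odot\cdots\odot\sigma_k\odot A_n^T$, with $A_n=[1/1,\dots,1/1]$ of length $n$. The unit matrix $I_n$ has $1/1$ on the diagonal and $1/0$ elsewhere. For $G_i=(\hat X_i,\hat\Sigma_i,\delta_i,\hat x_{0i},\hat x_{mi})$, $i=1,2$, with state sets of sizes $m$ and $n$, the parallel composition $G_1\|G_2$ is the bi-fuzzy automaton over a crisp state set of size $mn$ with initial state $\hat x_{01}\otimes\hat x_{02}$, final state $\hat x_{m1}\otimes\hat x_{m2}$, event set $\hat\Sigma_1\cup\hat\Sigma_2$, transitions $(\hat x_1\otimes\hat x_2,\sigma)\mapsto(\hat x_1\otimes\hat x_2)\odot\sigma$, where the matrix of $\sigma$ is $\sigma_1\otimes\sigma_2$ if $\sigma\in\hat\Sigma_1\cap\hat\Sigma_2$ ($\sigma_i$ its matrix in $G_i$), $\sigma_1\otimes I_n$ if $\sigma\in\hat\Sigma_1\setminus\hat\Sigma_2$, and $I_m\otimes\sigma_2$ if $\sigma\in\hat\Sigma_2\setminus\hat\Sigma_1$. *)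

theory Defs
  imports Main "HOL.Real"
begin

text \<open>Type-1 fuzzy sets on [0,1] are represented as functions real \<Rightarrow> real;
  only their values on [0,1] matter.\<close>
type_synonym fz = "real \<Rightarrow> real"

text \<open>Matrices over fuzzy sets, indexed from 0; dimensions are tracked explicitly.
  Row vectors are 1 x n matrices (row index 0).\<close>
type_synonym fmat = "nat \<Rightarrow> nat \<Rightarrow> fz"

definition ncfd :: "fz \<Rightarrow> bool" where
  "ncfd \<mu> \<longleftrightarrow>
     (\<forall>u\<in>{0..1}. 0 \<le> \<mu> u \<and> \<mu> u \<le> 1) \<and>
     (\<exists>u\<in>{0..1}. \<mu> u = 1) \<and>
     (\<forall>ui\<in>{0..1}. \<forall>uj\<in>{0..1}. \<forall>uk\<in>{0..1}.
        ui \<le> uj \<and> uj \<le> uk \<longrightarrow> min (\<mu> ui) (\<mu> uk) \<le> \<mu> uj)"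

text \<open>a/u0: value a at u0 and 0 elsewhere\<close>
definition singl :: "real \<Rightarrow> real \<Rightarrow> fz" where
  "singl a u0 = (\<lambda>u. if u = u0 then a else 0)"

definition fjoin :: "fz \<Rightarrow> fz \<Rightarrow> fz" where
  "fjoin \<mu>1 \<mu>2 = (\<lambda>v. if v \<in> {0..1} then
      Sup {min (\<mu>1 u) (\<mu>2 w) | u w. u \<in> {0..1} \<and> w \<in> {0..1} \<and> max u w = v}
     else 0)"

definition fmeet :: "fz \<Rightarrow> fz \<Rightarrow> fz" where
  "fmeet \<mu>1 \<mu>2 = (\<lambda>v. if v \<in> {0..1} then
      Sup {min (\<mu>1 u) (\<mu>2 w) | u w. u \<in> {0..1} \<and> w \<in> {0..1} \<and> min u w = v}
     else 0)"

text \<open>Finite join over indices 0..<n (1/0 is the neutral element of the join).\<close>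
definition bigjoin :: "nat \<Rightarrow> (nat \<Rightarrow> fz) \<Rightarrow> fz" where
  "bigjoin n f = foldr (\<lambda>y acc. fjoin (f y) acc) [0..<n] (singl 1 0)"

definition mcomp :: "nat \<Rightarrow> fmat \<Rightarrow> fmat \<Rightarrow> fmat" where
  "mcomp n R S = (\<lambda>x z. bigjoin n (\<lambda>y. fmeet (R x y) (S y z)))"

definition tensor :: "nat \<Rightarrow> nat \<Rightarrow> fmat \<Rightarrow> fmat \<Rightarrow> fmat" where
  "tensor p s A B = (\<lambda>r c. fmeet (A (r div p) (c div s)) (B (r mod p) (c mod s)))"

definition unitm :: fmat where
  "unitm = (\<lambda>i j. if i = j then singl 1 1 else singl 1 0)"

definition onescol :: fmat where
  "onescol = (\<lambda>i j. singl 1 1)"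

record 'e bfa =
  nst :: nat
  events :: "'e set"
  evm :: "'e \<Rightarrow> fmat"
  init :: fmat
  final :: fmat

definition is_bfa :: "'e bfa \<Rightarrow> bool" where
  "is_bfa G \<longleftrightarrow> 0 < nst G \<and>
     (\<forall>i<nst G. ncfd (init G 0 i) \<and> ncfd (final G 0 i)) \<and>
     (\<forall>\<sigma>\<in>events G. \<forall>i<nst G. \<forall>j<nst G. ncfd (evm G \<sigma> i j))"

definition lang_with :: "'e bfa \<Rightarrow> ('e \<Rightarrow> fmat) \<Rightarrow> 'e list \<Rightarrow> fz" where
  "lang_with G M s = (if s = [] then singl 1 1 else
     mcomp (nst G) (foldl (\<lambda>x \<sigma>. mcomp (nst G) x (M \<sigma>)) (init G) s) onescol 0 0)"

definition lang :: "'e bfa \<Rightarrow> 'e list \<Rightarrow> fz" where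
  "lang G s = lang_with G (evm G) s"

definition lang_ext :: "'e bfa \<Rightarrow> 'e list \<Rightarrow> fz" where
  "lang_ext G s = lang_with G (\<lambda>\<sigma>. if \<sigma> \<in> events G then evm G \<sigma> else unitm) s"

definition parcomp :: "'e bfa \<Rightarrow> 'e bfa \<Rightarrow> 'e bfa" where
  "parcomp G1 G2 = (let n = nst G2 in
     \<lparr> nst = nst G1 * n,
       events = events G1 \<union> events G2,
       evm = (\<lambda>\<sigma>. if \<sigma> \<in> events G1 \<and> \<sigma> \<in> events G2 then tensor n n (evm G1 \<sigma>) (evm G2 \<sigma>)
                  else if \<sigma> \<in> events G1 then tensor n n (evm G1 \<sigma>) unitm
                  else tensor n n unitm (evm G2 \<sigma>)),
       init = tensor 1 n (init G1) (init G2),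
       final = tensor 1 n (final G1) (final G2) \<rparr>)"

end

theory Submission
  imports Defs
begin


definition bnd :: "fz \<Rightarrow> bool" where
  "bnd f \<longleftrightarrow> (\<forall>u\<in>{0..1}. 0 \<le> f u \<and> f u \<le> 1)"
definition Lenv :: "fz \<Rightarrow> real \<Rightarrow> real" where
  "Lenv f v = Sup (f ` {0..v})"
definition Renv :: "fz \<Rightarrow> real \<Rightarrow> real" where
  "Renv f v = Sup (f ` {v..1})"
definition good :: "fz \<Rightarrow> bool" where
  "good f \<longleftrightarrow> bnd f \<and> (\<exists>u\<in>{0..1}. f u = 1) \<and>
     (\<forall>v\<in>{0..1}. f v = min (Lenv f v) (Renv f v))"
definition clean :: "fz \<Rightarrow> bool" where
  "clean f \<longleftrightarrow> (\<forall>v. v \<notin> {0..1} \<longrightarrow> f v = 0)"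

lemma bnd_bdd: "bnd f \<Longrightarrow> S \<subseteq> {0..1} \<Longrightarrow> bdd_above (f ` S)"
  unfolding bnd_def by (intro bdd_aboveI[where M=1]) auto

lemma L_upper: "bnd f \<Longrightarrow> 0 \<le> x \<Longrightarrow> x \<le> v \<Longrightarrow> v \<le> 1 \<Longrightarrow> f x \<le> Lenv f v"
  unfolding Lenv_def by (rule cSUP_upper) (auto intro: bnd_bdd)
lemma L_least: "0 \<le> v \<Longrightarrow> (\<And>x. 0 \<le> x \<Longrightarrow> x \<le> v \<Longrightarrow> f x \<le> c) \<Longrightarrow> Lenv f v \<le> c"
  unfolding Lenv_def by (rule cSUP_least) auto
lemma R_upper: "bnd f \<Longrightarrow> 0 \<le> v \<Longrightarrow> v \<le> x \<Longrightarrow> x \<le> 1 \<Longrightarrow> f x \<le> Renv f v"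
  unfolding Renv_def by (rule cSUP_upper) (auto intro: bnd_bdd)
lemma R_least: "v \<le> 1 \<Longrightarrow> (\<And>x. v \<le> x \<Longrightarrow> x \<le> 1 \<Longrightarrow> f x \<le> c) \<Longrightarrow> Renv f v \<le> c"
  unfolding Renv_def by (rule cSUP_least) auto

lemma min_sup2:
  fixes f g :: "'a \<Rightarrow> real"
  assumes "A \<noteq> {}" "B \<noteq> {}" "bdd_above (f`A)" "bdd_above (g`B)"
    "\<And>a b. a\<in>A \<Longrightarrow> b\<in>B \<Longrightarrow> min (f a) (g b) \<le> c"
  shows "min (Sup (f`A)) (Sup (g`B)) \<le> c"
proof (rule ccontr)
  assume "\<not> ?thesis"
  then have "c < Sup (f`A)" "c < Sup (g`B)" by auto
  then obtain a b where "a\<in>A" "c < f a" "b\<in>B" "c < g b"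
    using less_cSUP_iff[OF assms(1,3)] less_cSUP_iff[OF assms(2,4)] by blast
  with assms(5)[of a b] show False by auto
qed

lemma min_sup1:
  fixes g :: "'a \<Rightarrow> real"
  assumes "B \<noteq> {}" "bdd_above (g`B)" "\<And>b. b\<in>B \<Longrightarrow> min x (g b) \<le> c"
  shows "min x (Sup (g`B)) \<le> c"
proof (rule ccontr)
  assume "\<not> ?thesis"
  then have "c < x" "c < Sup (g`B)" by auto
  then obtain b where "b\<in>B" "c < g b"
    using less_cSUP_iff[OF assms(1,2)] by blast
  with assms(3)[of b] \<open>c < x\<close> show False by auto
qed

lemma LR_min:
  assumes "bnd f" "0 \<le> v" "v \<le> 1" "\<And>a b. 0 \<le> a \<Longrightarrow> a \<le> v \<Longrightarrow> v \<le> b \<Longrightarrow> b \<le> 1 \<Longrightarrow> min (f a) (f b) \<le> c"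
  shows "min (Lenv f v) (Renv f v) \<le> c"
  unfolding Lenv_def Renv_def
  by (rule min_sup2) (use assms in \<open>auto intro: bnd_bdd\<close>)

lemma set_bdd: "bnd f \<Longrightarrow> bnd g \<Longrightarrow> bdd_above {min (f u) (g w) | u w. u \<in> {0..1} \<and> w \<in> {0..1} \<and> P u w}"
  unfolding bnd_def by (intro bdd_aboveI[where M=1]) force

lemma fmeet_upper:
  assumes "bnd f" "bnd g" "u\<in>{0..1}" "w\<in>{0..1}"
  shows "min (f u) (g w) \<le> fmeet f g (min u w)"
proof -
  have "min u w \<in> {0..1}" using assms by auto
  then show ?thesis unfolding fmeet_def
    using assms set_bdd[OF assms(1,2), of "\<lambda>u' w'. min u' w' = min u w"] by (auto intro!: cSup_upper)
qed

lemma fjoin_upper: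
  assumes "bnd f" "bnd g" "u\<in>{0..1}" "w\<in>{0..1}"
  shows "min (f u) (g w) \<le> fjoin f g (max u w)"
proof -
  have "max u w \<in> {0..1}" using assms by auto
  then show ?thesis unfolding fjoin_def
    using assms set_bdd[OF assms(1,2), of "\<lambda>u' w'. max u' w' = max u w"] by (auto intro!: cSup_upper)
qed

lemma fmeet_least:
  assumes "v\<in>{0..1}" "\<And>u w. u\<in>{0..1} \<Longrightarrow> w\<in>{0..1} \<Longrightarrow> min u w = v \<Longrightarrow> min (f u) (g w) \<le> c"
  shows "fmeet f g v \<le> c"
proof -
  have "min (f v) (g v) \<in> {min (f u) (g w) | u w. u \<in> {0..1} \<and> w \<in> {0..1} \<and> min u w = v}"
    using assms(1) by (intro CollectI exI[of _ v]) auto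
  then show ?thesis unfolding fmeet_def using assms(1)
    apply simp apply (rule cSup_least) apply blast using assms(2) by auto
qed

lemma fjoin_least:
  assumes "v\<in>{0..1}" "\<And>u w. u\<in>{0..1} \<Longrightarrow> w\<in>{0..1} \<Longrightarrow> max u w = v \<Longrightarrow> min (f u) (g w) \<le> c"
  shows "fjoin f g v \<le> c"
proof -
  have "min (f v) (g v) \<in> {min (f u) (g w) | u w. u \<in> {0..1} \<and> w \<in> {0..1} \<and> max u w = v}"
    using assms(1) by (intro CollectI exI[of _ v]) auto
  then show ?thesis unfolding fjoin_def using assms(1)
    apply simp apply (rule cSup_least) apply blast using assms(2) by auto
qed

lemma fmeet_bnd: "bnd f \<Longrightarrow> bnd g \<Longrightarrow> bnd (fmeet f g)"
  unfolding bnd_def[of "fmeet f g"]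
proof (intro ballI conjI)
  fix v :: real assume v: "v \<in> {0..1}" and "bnd f" "bnd g"
  then have "min (f v) (g v) \<le> fmeet f g (min v v)" by (intro fmeet_upper) auto
  moreover have "0 \<le> min (f v) (g v)" using v \<open>bnd f\<close> \<open>bnd g\<close> unfolding bnd_def by auto
  ultimately show "0 \<le> fmeet f g v" by (metis min.idem order_trans)
  show "fmeet f g v \<le> 1" using v \<open>bnd f\<close> unfolding bnd_def
    by (intro fmeet_least) (auto simp: min_le_iff_disj)
qed

lemma fjoin_bnd: "bnd f \<Longrightarrow> bnd g \<Longrightarrow> bnd (fjoin f g)"
  unfolding bnd_def[of "fjoin f g"]
proof (intro ballI conjI)
  fix v :: real assume v: "v \<in> {0..1}" and "bnd f" "bnd g"
  then have "min (f v) (g v) \<le> fjoin f g (max v v)" by (intro fjoin_upper) auto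
  moreover have "0 \<le> min (f v) (g v)" using v \<open>bnd f\<close> \<open>bnd g\<close> unfolding bnd_def by auto
  ultimately show "0 \<le> fjoin f g v" by (metis max.idem order_trans)
  show "fjoin f g v \<le> 1" using v \<open>bnd f\<close> unfolding bnd_def
    by (intro fjoin_least) (auto simp: min_le_iff_disj)
qed

lemma fmeet_clean: "clean (fmeet f g)" unfolding clean_def fmeet_def by auto
lemma fjoin_clean: "clean (fjoin f g)" unfolding clean_def fjoin_def by auto


lemma good_bnd: "good f \<Longrightarrow> bnd f" unfolding good_def by auto
lemma good_peak: "good f \<Longrightarrow> \<exists>p\<in>{0..1}. f p = 1" unfolding good_def by auto
lemma good_eq: "good f \<Longrightarrow> v \<in> {0..1} \<Longrightarrow> f v = min (Lenv f v) (Renv f v)" unfolding good_def by auto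
lemma bndD: "bnd f \<Longrightarrow> 0 \<le> u \<Longrightarrow> u \<le> 1 \<Longrightarrow> 0 \<le> f u \<and> f u \<le> 1" unfolding bnd_def by auto

lemma Lmeet:
  assumes f: "good f" and g: "good g" and v: "0 \<le> v" "v \<le> 1"
  shows "Lenv (fmeet f g) v = max (Lenv f v) (Lenv g v)"
proof (rule antisym)
  have bf: "bnd f" and bg: "bnd g" using f g by (auto simp: good_bnd)
  have bh: "bnd (fmeet f g)" by (rule fmeet_bnd[OF bf bg])
  show "Lenv (fmeet f g) v \<le> max (Lenv f v) (Lenv g v)"
  proof (rule L_least[OF v(1)])
    fix x assume x: "0 \<le> x" "x \<le> v"
    show "fmeet f g x \<le> max (Lenv f v) (Lenv g v)"
    proof (rule fmeet_least)
      show "x \<in> {0..1}" using x v by auto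
      fix u w assume uw: "u \<in> {0..1}" "w \<in> {0..1}" "min u w = x"
      show "min (f u) (g w) \<le> max (Lenv f v) (Lenv g v)"
      proof (cases "u \<le> v")
        case True
        then have "f u \<le> Lenv f v" using uw v by (intro L_upper[OF bf]) auto
        then show ?thesis by linarith
      next
        case False
        then have "w \<le> v" using uw x by linarith
        then have "g w \<le> Lenv g v" using uw v by (intro L_upper[OF bg]) auto
        then show ?thesis by linarith
      qed
    qed
  qed
  obtain pf where pf: "pf \<in> {0..1}" "f pf = 1" using good_peak[OF f] by blast
  obtain pg where pg: "pg \<in> {0..1}" "g pg = 1" using good_peak[OF g] by blast
  have "Lenv f v \<le> Lenv (fmeet f g) v"
  proof (rule L_least[OF v(1)])
    fix x assume x: "0 \<le> x" "x \<le> v"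
    have "min (f x) (g pg) \<le> fmeet f g (min x pg)" using x v pg by (intro fmeet_upper[OF bf bg]) auto
    also have "\<dots> \<le> Lenv (fmeet f g) v" using x v pg by (intro L_upper[OF bh]) auto
    finally show "f x \<le> Lenv (fmeet f g) v" using pg bndD[OF bf x(1)] x v by auto
  qed
  moreover have "Lenv g v \<le> Lenv (fmeet f g) v"
  proof (rule L_least[OF v(1)])
    fix x assume x: "0 \<le> x" "x \<le> v"
    have "min (f pf) (g x) \<le> fmeet f g (min pf x)" using x v pf by (intro fmeet_upper[OF bf bg]) auto
    also have "\<dots> \<le> Lenv (fmeet f g) v" using x v pf by (intro L_upper[OF bh]) auto
    finally show "g x \<le> Lenv (fmeet f g) v" using pf bndD[OF bg x(1)] x v by auto
  qed
  ultimately show "max (Lenv f v) (Lenv g v) \<le> Lenv (fmeet f g) v" by simp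
qed

lemma Rjoin:
  assumes f: "good f" and g: "good g" and v: "0 \<le> v" "v \<le> 1"
  shows "Renv (fjoin f g) v = max (Renv f v) (Renv g v)"
proof (rule antisym)
  have bf: "bnd f" and bg: "bnd g" using f g by (auto simp: good_bnd)
  have bh: "bnd (fjoin f g)" by (rule fjoin_bnd[OF bf bg])
  show "Renv (fjoin f g) v \<le> max (Renv f v) (Renv g v)"
  proof (rule R_least[OF v(2)])
    fix x assume x: "v \<le> x" "x \<le> 1"
    show "fjoin f g x \<le> max (Renv f v) (Renv g v)"
    proof (rule fjoin_least)
      show "x \<in> {0..1}" using x v by auto
      fix u w assume uw: "u \<in> {0..1}" "w \<in> {0..1}" "max u w = x"
      show "min (f u) (g w) \<le> max (Renv f v) (Renv g v)"
      proof (cases "v \<le> u")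
        case True
        then have "f u \<le> Renv f v" using uw v by (intro R_upper[OF bf]) auto
        then show ?thesis by linarith
      next
        case False
        then have "v \<le> w" using uw x by linarith
        then have "g w \<le> Renv g v" using uw v by (intro R_upper[OF bg]) auto
        then show ?thesis by linarith
      qed
    qed
  qed
  obtain pf where pf: "pf \<in> {0..1}" "f pf = 1" using good_peak[OF f] by blast
  obtain pg where pg: "pg \<in> {0..1}" "g pg = 1" using good_peak[OF g] by blast
  have "Renv f v \<le> Renv (fjoin f g) v"
  proof (rule R_least[OF v(2)])
    fix x assume x: "v \<le> x" "x \<le> 1"
    have "min (f x) (g pg) \<le> fjoin f g (max x pg)" using x v pg by (intro fjoin_upper[OF bf bg]) auto
    also have "\<dots> \<le> Renv (fjoin f g) v" using x v pg by (intro R_upper[OF bh]) auto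
    finally show "f x \<le> Renv (fjoin f g) v" using pg bndD[OF bf, of x] x v by auto
  qed
  moreover have "Renv g v \<le> Renv (fjoin f g) v"
  proof (rule R_least[OF v(2)])
    fix x assume x: "v \<le> x" "x \<le> 1"
    have "min (f pf) (g x) \<le> fjoin f g (max pf x)" using x v pf by (intro fjoin_upper[OF bf bg]) auto
    also have "\<dots> \<le> Renv (fjoin f g) v" using x v pf by (intro R_upper[OF bh]) auto
    finally show "g x \<le> Renv (fjoin f g) v" using pf bndD[OF bg, of x] x v by auto
  qed
  ultimately show "max (Renv f v) (Renv g v) \<le> Renv (fjoin f g) v" by simp
qed

lemma Rmeet:
  assumes bf: "bnd f" and bg: "bnd g" and v: "0 \<le> v" "v \<le> 1"
  shows "Renv (fmeet f g) v = min (Renv f v) (Renv g v)"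
proof (rule antisym)
  have bh: "bnd (fmeet f g)" by (rule fmeet_bnd[OF bf bg])
  show "Renv (fmeet f g) v \<le> min (Renv f v) (Renv g v)"
  proof (rule R_least[OF v(2)])
    fix x assume x: "v \<le> x" "x \<le> 1"
    show "fmeet f g x \<le> min (Renv f v) (Renv g v)"
    proof (rule fmeet_least)
      show "x \<in> {0..1}" using x v by auto
      fix u w assume uw: "u \<in> {0..1}" "w \<in> {0..1}" "min u w = x"
      have "f u \<le> Renv f v" using uw v x by (intro R_upper[OF bf]) auto
      moreover have "g w \<le> Renv g v" using uw v x by (intro R_upper[OF bg]) auto
      ultimately show "min (f u) (g w) \<le> min (Renv f v) (Renv g v)" by linarith
    qed
  qed
  show "min (Renv f v) (Renv g v) \<le> Renv (fmeet f g) v"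
    unfolding Renv_def[of f] Renv_def[of g]
  proof (rule min_sup2)
    show "{v..1} \<noteq> {}" "{v..1} \<noteq> {}" using v by auto
    show "bdd_above (f ` {v..1})" "bdd_above (g ` {v..1})" using v bf bg by (auto intro: bnd_bdd)
    fix a b assume ab: "a \<in> {v..1}" "b \<in> {v..1}"
    have "min (f a) (g b) \<le> fmeet f g (min a b)" using ab v by (intro fmeet_upper[OF bf bg]) auto
    also have "\<dots> \<le> Renv (fmeet f g) v" using ab v by (intro R_upper[OF bh]) auto
    finally show "min (f a) (g b) \<le> Renv (fmeet f g) v" .
  qed
qed

lemma Ljoin:
  assumes bf: "bnd f" and bg: "bnd g" and v: "0 \<le> v" "v \<le> 1"
  shows "Lenv (fjoin f g) v = min (Lenv f v) (Lenv g v)"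
proof (rule antisym)
  have bh: "bnd (fjoin f g)" by (rule fjoin_bnd[OF bf bg])
  show "Lenv (fjoin f g) v \<le> min (Lenv f v) (Lenv g v)"
  proof (rule L_least[OF v(1)])
    fix x assume x: "0 \<le> x" "x \<le> v"
    show "fjoin f g x \<le> min (Lenv f v) (Lenv g v)"
    proof (rule fjoin_least)
      show "x \<in> {0..1}" using x v by auto
      fix u w assume uw: "u \<in> {0..1}" "w \<in> {0..1}" "max u w = x"
      have "f u \<le> Lenv f v" using uw v x by (intro L_upper[OF bf]) auto
      moreover have "g w \<le> Lenv g v" using uw v x by (intro L_upper[OF bg]) auto
      ultimately show "min (f u) (g w) \<le> min (Lenv f v) (Lenv g v)" by linarith
    qed
  qed
  show "min (Lenv f v) (Lenv g v) \<le> Lenv (fjoin f g) v"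
    unfolding Lenv_def[of f] Lenv_def[of g]
  proof (rule min_sup2)
    show "{0..v} \<noteq> {}" "{0..v} \<noteq> {}" using v by auto
    show "bdd_above (f ` {0..v})" "bdd_above (g ` {0..v})" using v bf bg by (auto intro: bnd_bdd)
    fix a b assume ab: "a \<in> {0..v}" "b \<in> {0..v}"
    have "min (f a) (g b) \<le> fjoin f g (max a b)" using ab v by (intro fjoin_upper[OF bf bg]) auto
    also have "\<dots> \<le> Lenv (fjoin f g) v" using ab v by (intro L_upper[OF bh]) auto
    finally show "min (f a) (g b) \<le> Lenv (fjoin f g) v" .
  qed
qed


lemma L_ge: "bnd h \<Longrightarrow> 0 \<le> v \<Longrightarrow> v \<le> 1 \<Longrightarrow> h v \<le> Lenv h v"
  by (rule L_upper) auto
lemma R_ge: "bnd h \<Longrightarrow> 0 \<le> v \<Longrightarrow> v \<le> 1 \<Longrightarrow> h v \<le> Renv h v"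
  by (rule R_upper) auto

lemma good_fmeet:
  assumes f: "good f" and g: "good g"
  shows "good (fmeet f g)"
proof -
  have bf: "bnd f" and bg: "bnd g" using f g by (auto simp: good_bnd)
  have bh: "bnd (fmeet f g)" by (rule fmeet_bnd[OF bf bg])
  obtain pf where pf: "pf \<in> {0..1}" "f pf = 1" using good_peak[OF f] by blast
  obtain pg where pg: "pg \<in> {0..1}" "g pg = 1" using good_peak[OF g] by blast
  have "min (f pf) (g pg) \<le> fmeet f g (min pf pg)" using pf pg by (intro fmeet_upper[OF bf bg]) auto
  moreover have "fmeet f g (min pf pg) \<le> 1" using bndD[OF bh, of "min pf pg"] pf pg by auto
  ultimately have peak: "\<exists>u\<in>{0..1}. fmeet f g u = 1" using pf pg
    by (intro bexI[of _ "min pf pg"]) auto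
  have eq: "fmeet f g v = min (Lenv (fmeet f g) v) (Renv (fmeet f g) v)" if v: "0 \<le> v" "v \<le> 1" for v
  proof (rule antisym)
    show "fmeet f g v \<le> min (Lenv (fmeet f g) v) (Renv (fmeet f g) v)"
      using L_ge[OF bh v] R_ge[OF bh v] by simp
    have A: "min (f v) (Renv g v) \<le> fmeet f g v"
      unfolding Renv_def
    proof (rule min_sup1)
      show "{v..1} \<noteq> {}" "bdd_above (g ` {v..1})" using v bg by (auto intro: bnd_bdd)
      fix w assume "w \<in> {v..1}"
      then show "min (f v) (g w) \<le> fmeet f g v" using fmeet_upper[OF bf bg, of v w] v by auto
    qed
    have B: "min (g v) (Renv f v) \<le> fmeet f g v"
      unfolding Renv_def
    proof (rule min_sup1)
      show "{v..1} \<noteq> {}" "bdd_above (f ` {v..1})" using v bf by (auto intro: bnd_bdd)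
      fix w assume "w \<in> {v..1}"
      then show "min (g v) (f w) \<le> fmeet f g v" using fmeet_upper[OF bf bg, of w v] v
        by (auto simp: min.commute)
    qed
    have ef: "f v = min (Lenv f v) (Renv f v)" and eg: "g v = min (Lenv g v) (Renv g v)"
      using good_eq[OF f] good_eq[OF g] v by auto
    show "min (Lenv (fmeet f g) v) (Renv (fmeet f g) v) \<le> fmeet f g v"
      unfolding Lmeet[OF f g v] Rmeet[OF bf bg v]
      using A B ef eg by (auto simp: min_def max_def split: if_splits)
  qed
  show ?thesis unfolding good_def using bh peak eq by auto
qed

lemma good_fjoin:
  assumes f: "good f" and g: "good g"
  shows "good (fjoin f g)"
proof -
  have bf: "bnd f" and bg: "bnd g" using f g by (auto simp: good_bnd)
  have bh: "bnd (fjoin f g)" by (rule fjoin_bnd[OF bf bg])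
  obtain pf where pf: "pf \<in> {0..1}" "f pf = 1" using good_peak[OF f] by blast
  obtain pg where pg: "pg \<in> {0..1}" "g pg = 1" using good_peak[OF g] by blast
  have "min (f pf) (g pg) \<le> fjoin f g (max pf pg)" using pf pg by (intro fjoin_upper[OF bf bg]) auto
  moreover have "fjoin f g (max pf pg) \<le> 1" using bndD[OF bh, of "max pf pg"] pf pg by auto
  ultimately have peak: "\<exists>u\<in>{0..1}. fjoin f g u = 1" using pf pg
    by (intro bexI[of _ "max pf pg"]) auto
  have eq: "fjoin f g v = min (Lenv (fjoin f g) v) (Renv (fjoin f g) v)" if v: "0 \<le> v" "v \<le> 1" for v
  proof (rule antisym)
    show "fjoin f g v \<le> min (Lenv (fjoin f g) v) (Renv (fjoin f g) v)"
      using L_ge[OF bh v] R_ge[OF bh v] by simp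
    have A: "min (f v) (Lenv g v) \<le> fjoin f g v"
      unfolding Lenv_def
    proof (rule min_sup1)
      show "{0..v} \<noteq> {}" "bdd_above (g ` {0..v})" using v bg by (auto intro: bnd_bdd)
      fix w assume "w \<in> {0..v}"
      then show "min (f v) (g w) \<le> fjoin f g v" using fjoin_upper[OF bf bg, of v w] v by auto
    qed
    have B: "min (g v) (Lenv f v) \<le> fjoin f g v"
      unfolding Lenv_def
    proof (rule min_sup1)
      show "{0..v} \<noteq> {}" "bdd_above (f ` {0..v})" using v bf by (auto intro: bnd_bdd)
      fix w assume "w \<in> {0..v}"
      then show "min (g v) (f w) \<le> fjoin f g v" using fjoin_upper[OF bf bg, of w v] v
        by (auto simp: min.commute max.commute)
    qed
    have ef: "f v = min (Lenv f v) (Renv f v)" and eg: "g v = min (Lenv g v) (Renv g v)"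
      using good_eq[OF f] good_eq[OF g] v by auto
    show "min (Lenv (fjoin f g) v) (Renv (fjoin f g) v) \<le> fjoin f g v"
      unfolding Ljoin[OF bf bg v] Rjoin[OF f g v]
      using A B ef eg by (auto simp: min_def max_def split: if_splits)
  qed
  show ?thesis unfolding good_def using bh peak eq by auto
qed

lemma ncfd_good:
  assumes "ncfd f" shows "good f"
proof -
  have bf: "bnd f" using assms unfolding ncfd_def bnd_def by auto
  have eq: "f v = min (Lenv f v) (Renv f v)" if v: "0 \<le> v" "v \<le> 1" for v
  proof (rule antisym)
    show "f v \<le> min (Lenv f v) (Renv f v)" using L_ge[OF bf v] R_ge[OF bf v] by simp
    show "min (Lenv f v) (Renv f v) \<le> f v"
      by (rule LR_min[OF bf v]) (use assms v in \<open>auto simp: ncfd_def\<close>)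
  qed
  show ?thesis unfolding good_def using bf eq assms unfolding ncfd_def by auto
qed

lemma ncfd_s0: "ncfd (singl 1 0)" unfolding ncfd_def singl_def by auto
lemma ncfd_s1: "ncfd (singl 1 1)" unfolding ncfd_def singl_def by auto
lemma good_s0: "good (singl 1 0)" by (rule ncfd_good[OF ncfd_s0])
lemma good_s1: "good (singl 1 1)" by (rule ncfd_good[OF ncfd_s1])
lemma clean_s0: "clean (singl 1 0)" unfolding clean_def singl_def by auto
lemma clean_s1: "clean (singl 1 1)" unfolding clean_def singl_def by auto

lemma good_ext:
  assumes "good h1" "good h2" "clean h1" "clean h2"
    "\<And>v. 0 \<le> v \<Longrightarrow> v \<le> 1 \<Longrightarrow> Lenv h1 v = Lenv h2 v"
    "\<And>v. 0 \<le> v \<Longrightarrow> v \<le> 1 \<Longrightarrow> Renv h1 v = Renv h2 v"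
  shows "h1 = h2"
proof
  fix v show "h1 v = h2 v"
  proof (cases "v \<in> {0..1}")
    case True then show ?thesis using good_eq[OF assms(1)] good_eq[OF assms(2)] assms(5,6) by auto
  next
    case False then show ?thesis using assms(3,4) unfolding clean_def by auto
  qed
qed

lemma L_s0: "0 \<le> v \<Longrightarrow> v \<le> 1 \<Longrightarrow> Lenv (singl 1 0) v = 1"
  using L_upper[OF good_bnd[OF good_s0], of 0 v] L_least[of v "singl 1 0" 1]
  by (auto simp: singl_def)
lemma R_s0: "0 \<le> v \<Longrightarrow> v \<le> 1 \<Longrightarrow> Renv (singl 1 0) v = (if v = 0 then 1 else 0)"
  using R_upper[OF good_bnd[OF good_s0], of v v] R_least[of v "singl 1 0" 1] R_least[of v "singl 1 0" 0]
  by (auto simp: singl_def)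
lemma L_s1: "0 \<le> v \<Longrightarrow> v \<le> 1 \<Longrightarrow> Lenv (singl 1 1) v = (if v = 1 then 1 else 0)"
  using L_upper[OF good_bnd[OF good_s1], of v v] L_least[of v "singl 1 1" 1] L_least[of v "singl 1 1" 0]
  by (auto simp: singl_def)
lemma R_s1: "0 \<le> v \<Longrightarrow> v \<le> 1 \<Longrightarrow> Renv (singl 1 1) v = 1"
  using R_upper[OF good_bnd[OF good_s1], of v 1] R_least[of v "singl 1 1" 1]
  by (auto simp: singl_def)

lemma env_bounds:
  assumes "good h" "0 \<le> v" "v \<le> 1"
  shows "0 \<le> Lenv h v" "Lenv h v \<le> 1" "0 \<le> Renv h v" "Renv h v \<le> 1"
proof -
  have b: "bnd h" using assms good_bnd by auto
  show "0 \<le> Lenv h v" using L_ge[OF b assms(2,3)] bndD[OF b assms(2,3)] by linarith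
  show "0 \<le> Renv h v" using R_ge[OF b assms(2,3)] bndD[OF b assms(2,3)] by linarith
  show "Lenv h v \<le> 1" using assms(2) by (rule L_least) (use b assms in \<open>auto simp: bnd_def\<close>)
  show "Renv h v \<le> 1" using assms(3) by (rule R_least) (use b assms in \<open>auto simp: bnd_def\<close>)
qed

lemma R0_good: "good h \<Longrightarrow> Renv h 0 = 1"
  using env_bounds[of h 0] good_peak[of h] R_upper[OF good_bnd, of h 0] by fastforce

lemma L1_good: "good h \<Longrightarrow> Lenv h 1 = 1"
  using env_bounds[of h 1] good_peak[of h] L_upper[OF good_bnd, of h _ 1] by fastforce


lemma gb: "good f \<Longrightarrow> bnd f" by (rule good_bnd)

lemma meet_comm: "good f \<Longrightarrow> good g \<Longrightarrow> fmeet f g = fmeet g f"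
  by (rule good_ext) (auto simp: good_fmeet fmeet_clean Lmeet Rmeet gb max.commute min.commute)

lemma meet4: "good a \<Longrightarrow> good b \<Longrightarrow> good c \<Longrightarrow> good d \<Longrightarrow>
  fmeet (fmeet a b) (fmeet c d) = fmeet (fmeet a c) (fmeet b d)"
  by (rule good_ext) (auto simp: good_fmeet fmeet_clean Lmeet Rmeet gb max_def min_def)

lemma join_assoc: "good a \<Longrightarrow> good b \<Longrightarrow> good c \<Longrightarrow>
  fjoin (fjoin a b) c = fjoin a (fjoin b c)"
  by (rule good_ext) (auto simp: good_fjoin fjoin_clean Ljoin Rjoin gb max_def min_def)

lemma distrib: "good a \<Longrightarrow> good b \<Longrightarrow> good c \<Longrightarrow>
  fmeet a (fjoin b c) = fjoin (fmeet a b) (fmeet a c)"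
  by (rule good_ext) (auto simp: good_fjoin fjoin_clean Ljoin Rjoin good_fmeet fmeet_clean Lmeet Rmeet gb max_def min_def)

lemma join_bot: assumes "good h" "clean h" shows "fjoin (singl 1 0) h = h"
proof (rule good_ext)
  fix v :: real assume v: "0 \<le> v" "v \<le> 1"
  show "Lenv (fjoin (singl 1 0) h) v = Lenv h v"
    using env_bounds[OF assms(1) v] by (simp add: Ljoin gb good_s0 assms v L_s0)
  show "Renv (fjoin (singl 1 0) h) v = Renv h v"
    using env_bounds[OF assms(1) v] R0_good[OF assms(1)] by (simp add: Rjoin gb good_s0 assms v R_s0)
qed (use assms in \<open>auto simp: good_fjoin good_s0 fjoin_clean\<close>)

lemma meet_bot: assumes "good h" shows "fmeet h (singl 1 0) = singl 1 0"
proof (rule good_ext)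
  fix v :: real assume v: "0 \<le> v" "v \<le> 1"
  show "Lenv (fmeet h (singl 1 0)) v = Lenv (singl 1 0) v"
    using env_bounds[OF assms(1) v] by (simp add: Lmeet gb good_s0 assms v L_s0)
  show "Renv (fmeet h (singl 1 0)) v = Renv (singl 1 0) v"
    using env_bounds[OF assms(1) v] R0_good[OF assms(1)] by (simp add: Rmeet gb good_s0 assms v R_s0)
qed (use assms in \<open>auto simp: good_fmeet good_s0 fmeet_clean clean_s0\<close>)

lemma top_top: "fmeet (singl 1 1) (singl 1 1) = singl 1 1"
  by (rule good_ext) (auto simp: good_fmeet good_s1 fmeet_clean clean_s1 Lmeet Rmeet gb)




lemma bigjoin_0: "bigjoin 0 f = singl 1 0" by (simp add: bigjoin_def)
lemma bigjoin_Suc: "bigjoin (Suc n) f = fjoin (f 0) (bigjoin n (\<lambda>i. f (Suc i)))"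
proof -
  have "[0..<Suc n] = 0 # map Suc [0..<n]"
    by (simp only: upt_conv_Cons[of 0 "Suc n"] zero_less_Suc map_Suc_upt)
  then show ?thesis by (simp add: bigjoin_def foldr_map o_def del: upt_Suc)
qed

lemma bigjoin_cong: "(\<And>i. i < n \<Longrightarrow> f i = g i) \<Longrightarrow> bigjoin n f = bigjoin n g"
proof (induction n arbitrary: f g)
  case 0 then show ?case by (simp add: bigjoin_0)
next
  case (Suc n)
  have "bigjoin n (\<lambda>i. f (Suc i)) = bigjoin n (\<lambda>i. g (Suc i))"
    by (rule Suc.IH) (use Suc.prems in auto)
  then show ?case using Suc.prems[of 0] by (simp only: bigjoin_Suc zero_less_Suc)
qed

lemma good_bigjoin: "(\<And>i. i < n \<Longrightarrow> good (f i)) \<Longrightarrow> good (bigjoin n f)"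
proof (induction n arbitrary: f)
  case 0 then show ?case by (simp add: bigjoin_0 good_s0)
next
  case (Suc n)
  have "good (bigjoin n (\<lambda>i. f (Suc i)))"
    by (rule Suc.IH) (use Suc.prems in auto)
  then show ?case using Suc.prems[of 0] by (simp only: bigjoin_Suc) (simp add: good_fjoin)
qed

lemma clean_bigjoin: "clean (bigjoin n f)"
  by (cases n) (simp_all add: bigjoin_0 bigjoin_Suc clean_s0 fjoin_clean)

lemma J1: "(\<And>i. i < a + b \<Longrightarrow> good (f i)) \<Longrightarrow>
  bigjoin (a + b) f = fjoin (bigjoin a f) (bigjoin b (\<lambda>i. f (a + i)))"
proof (induction a arbitrary: f)
  case 0 then show ?case
    by (simp add: bigjoin_0 join_bot good_bigjoin clean_bigjoin)
next
  case (Suc a)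
  have "bigjoin (Suc a + b) f = fjoin (f 0) (bigjoin (a + b) (\<lambda>i. f (Suc i)))"
    by (simp add: bigjoin_Suc)
  also have "\<dots> = fjoin (f 0) (fjoin (bigjoin a (\<lambda>i. f (Suc i))) (bigjoin b (\<lambda>i. f (Suc (a + i)))))"
    using Suc.IH[of "\<lambda>i. f (Suc i)"] Suc.prems by simp
  also have "\<dots> = fjoin (fjoin (f 0) (bigjoin a (\<lambda>i. f (Suc i)))) (bigjoin b (\<lambda>i. f (Suc (a + i))))"
    using Suc.prems by (intro join_assoc[symmetric] good_bigjoin) auto
  finally show ?case by (simp add: bigjoin_Suc)
qed

lemma J2: "(\<And>i. i < m * n \<Longrightarrow> good (f i)) \<Longrightarrow>
  bigjoin (m * n) f = bigjoin m (\<lambda>a. bigjoin n (\<lambda>b. f (a * n + b)))"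
proof (induction m arbitrary: f)
  case 0 then show ?case by (simp add: bigjoin_0)
next
  case (Suc m)
  have "bigjoin (Suc m * n) f = fjoin (bigjoin n f) (bigjoin (m * n) (\<lambda>i. f (n + i)))"
    using J1[of n "m * n" f] Suc.prems by simp
  also have "\<dots> = fjoin (bigjoin n f) (bigjoin m (\<lambda>a. bigjoin n (\<lambda>b. f (n + (a * n + b)))))"
    using Suc.IH[of "\<lambda>i. f (n + i)"] Suc.prems by simp
  finally show ?case by (simp add: bigjoin_Suc algebra_simps)
qed

lemma J3: "good x \<Longrightarrow> (\<And>i. i < n \<Longrightarrow> good (q i)) \<Longrightarrow>
  fmeet x (bigjoin n q) = bigjoin n (\<lambda>b. fmeet x (q b))"
proof (induction n arbitrary: q)
  case 0 then show ?case by (simp add: bigjoin_0 meet_bot)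
next
  case (Suc n)
  have IH: "fmeet x (bigjoin n (\<lambda>i. q (Suc i))) = bigjoin n (\<lambda>b. fmeet x (q (Suc b)))"
    by (rule Suc.IH[OF Suc.prems(1)]) (use Suc.prems in auto)
  have g: "good (bigjoin n (\<lambda>i. q (Suc i)))" by (rule good_bigjoin) (use Suc.prems in auto)
  have "fmeet x (bigjoin (Suc n) q) = fjoin (fmeet x (q 0)) (fmeet x (bigjoin n (\<lambda>i. q (Suc i))))"
    unfolding bigjoin_Suc using Suc.prems g by (intro distrib) auto
  then show ?case unfolding IH by (simp only: bigjoin_Suc)
qed

lemma prod_join:
  assumes "\<And>a. a < m \<Longrightarrow> good (p a)" "\<And>b. b < n \<Longrightarrow> good (q b)"
  shows "fmeet (bigjoin m p) (bigjoin n q) = bigjoin (m * n) (\<lambda>r. fmeet (p (r div n)) (q (r mod n)))"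
proof -
  have "fmeet (bigjoin m p) (bigjoin n q) = fmeet (bigjoin n q) (bigjoin m p)"
    using assms by (intro meet_comm good_bigjoin) auto
  also have "\<dots> = bigjoin m (\<lambda>a. fmeet (bigjoin n q) (p a))"
    using assms by (intro J3 good_bigjoin) auto
  also have "\<dots> = bigjoin m (\<lambda>a. fmeet (p a) (bigjoin n q))"
    using assms by (intro bigjoin_cong meet_comm good_bigjoin) auto
  also have "\<dots> = bigjoin m (\<lambda>a. bigjoin n (\<lambda>b. fmeet (p a) (q b)))"
    using assms by (intro bigjoin_cong J3) auto
  also have "\<dots> = bigjoin m (\<lambda>a. bigjoin n (\<lambda>b. fmeet (p ((a * n + b) div n)) (q ((a * n + b) mod n))))"
    by (intro bigjoin_cong) auto
  also have "\<dots> = bigjoin (m * n) (\<lambda>r. fmeet (p (r div n)) (q (r mod n)))"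
  proof (rule J2[symmetric])
    fix i assume i: "i < m * n"
    then have "n > 0" by (cases n) auto
    then show "good (fmeet (p (i div n)) (q (i mod n)))"
      using i assms by (intro good_fmeet) (auto simp: less_mult_imp_div_less mult.commute)
  qed
  finally show ?thesis .
qed



lemma divmod_bounds: "(c::nat) < m * n \<Longrightarrow> c div n < m \<and> c mod n < n"
  by (cases "n = 0") (auto simp: less_mult_imp_div_less mult.commute)

lemma step:
  assumes hX: "\<And>c. c < m * n \<Longrightarrow> X 0 c = fmeet (Y 0 (c div n)) (Z 0 (c mod n))"
    and gY: "\<And>a. a < m \<Longrightarrow> good (Y 0 a)" and gZ: "\<And>b. b < n \<Longrightarrow> good (Z 0 b)"
    and gA: "\<And>a j. a < m \<Longrightarrow> j < m \<Longrightarrow> good (A a j)"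
    and gB: "\<And>b l. b < n \<Longrightarrow> l < n \<Longrightarrow> good (B b l)"
    and c: "c < m * n"
  shows "mcomp (m * n) X (tensor n n A B) 0 c = fmeet (mcomp m Y A 0 (c div n)) (mcomp n Z B 0 (c mod n))"
proof -
  define j where "j = c div n"
  define l where "l = c mod n"
  have jl: "j < m" "l < n" using divmod_bounds[OF c] by (auto simp: j_def l_def)
  have "mcomp (m * n) X (tensor n n A B) 0 c =
     bigjoin (m * n) (\<lambda>r. fmeet (X 0 r) (fmeet (A (r div n) j) (B (r mod n) l)))"
    by (simp add: mcomp_def tensor_def j_def l_def)
  also have "\<dots> = bigjoin (m * n) (\<lambda>r. fmeet (fmeet (Y 0 (r div n)) (A (r div n) j)) (fmeet (Z 0 (r mod n)) (B (r mod n) l)))"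
  proof (rule bigjoin_cong)
    fix r assume r: "r < m * n"
    note b = divmod_bounds[OF r]
    show "fmeet (X 0 r) (fmeet (A (r div n) j) (B (r mod n) l)) =
      fmeet (fmeet (Y 0 (r div n)) (A (r div n) j)) (fmeet (Z 0 (r mod n)) (B (r mod n) l))"
      unfolding hX[OF r] using b jl by (intro meet4 gY gZ gA gB) auto
  qed
  also have "\<dots> = fmeet (bigjoin m (\<lambda>a. fmeet (Y 0 a) (A a j))) (bigjoin n (\<lambda>b. fmeet (Z 0 b) (B b l)))"
    using jl by (intro prod_join[symmetric] good_fmeet gY gZ gA gB) auto
  also have "\<dots> = fmeet (mcomp m Y A 0 j) (mcomp n Z B 0 l)"
    by (simp add: mcomp_def)
  finally show ?thesis by (simp add: j_def l_def)
qed

lemma good_mcomp: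
  assumes "\<And>a. a < m \<Longrightarrow> good (Y 0 a)" "\<And>a j. a < m \<Longrightarrow> j < m \<Longrightarrow> good (A a j)" "j < m"
  shows "good (mcomp m Y A 0 j)"
  unfolding mcomp_def using assms by (intro good_bigjoin good_fmeet) auto

lemma invariant:
  fixes s :: "'e list"
  assumes gM1: "\<And>\<sigma> i j. \<sigma> \<in> set s \<Longrightarrow> i < m \<Longrightarrow> j < m \<Longrightarrow> good (M1 \<sigma> i j)"
    and gM2: "\<And>\<sigma> i j. \<sigma> \<in> set s \<Longrightarrow> i < n \<Longrightarrow> j < n \<Longrightarrow> good (M2 \<sigma> i j)"
    and gY: "\<And>a. a < m \<Longrightarrow> good (Y0 0 a)" and gZ: "\<And>b. b < n \<Longrightarrow> good (Z0 0 b)"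
    and hX: "\<And>c. c < m * n \<Longrightarrow> X0 0 c = fmeet (Y0 0 (c div n)) (Z0 0 (c mod n))"
  shows "(\<forall>c < m * n. foldl (\<lambda>x \<sigma>. mcomp (m * n) x (tensor n n (M1 \<sigma>) (M2 \<sigma>))) X0 s 0 c =
            fmeet (foldl (\<lambda>x \<sigma>. mcomp m x (M1 \<sigma>)) Y0 s 0 (c div n))
                  (foldl (\<lambda>x \<sigma>. mcomp n x (M2 \<sigma>)) Z0 s 0 (c mod n))) \<and>
         (\<forall>a < m. good (foldl (\<lambda>x \<sigma>. mcomp m x (M1 \<sigma>)) Y0 s 0 a)) \<and>
         (\<forall>b < n. good (foldl (\<lambda>x \<sigma>. mcomp n x (M2 \<sigma>)) Z0 s 0 b))"
  using gM1 gM2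
proof (induction s rule: rev_induct)
  case Nil then show ?case using gY gZ hX by simp
next
  case (snoc \<sigma> s)
  have IH: "(\<forall>c < m * n. foldl (\<lambda>x \<sigma>. mcomp (m * n) x (tensor n n (M1 \<sigma>) (M2 \<sigma>))) X0 s 0 c =
            fmeet (foldl (\<lambda>x \<sigma>. mcomp m x (M1 \<sigma>)) Y0 s 0 (c div n))
                  (foldl (\<lambda>x \<sigma>. mcomp n x (M2 \<sigma>)) Z0 s 0 (c mod n))) \<and>
         (\<forall>a < m. good (foldl (\<lambda>x \<sigma>. mcomp m x (M1 \<sigma>)) Y0 s 0 a)) \<and>
         (\<forall>b < n. good (foldl (\<lambda>x \<sigma>. mcomp n x (M2 \<sigma>)) Z0 s 0 b))"
    by (rule snoc.IH) (use snoc.prems in auto)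
  have g1: "\<And>i j. i < m \<Longrightarrow> j < m \<Longrightarrow> good (M1 \<sigma> i j)" using snoc.prems(1) by auto
  have g2: "\<And>i j. i < n \<Longrightarrow> j < n \<Longrightarrow> good (M2 \<sigma> i j)" using snoc.prems(2) by auto
  show ?case
    using IH g1 g2 by (auto intro!: step good_mcomp)
qed


theorem proposition4:
  fixes G1 G2 :: "'e bfa" and s :: "'e list"
  assumes "is_bfa G1" and "is_bfa G2"
    and "s \<in> lists (events G1 \<union> events G2)"
  shows "lang (parcomp G1 G2) s = fmeet (lang_ext G1 s) (lang_ext G2 s)"
proof (cases "s = []")
  case True then show ?thesis by (simp add: lang_def lang_ext_def lang_with_def top_top)
next
  case False
  define m where "m = nst G1"
  define n where "n = nst G2"
  define M1 where "M1 = (\<lambda>\<sigma>. if \<sigma> \<in> events G1 then evm G1 \<sigma> else unitm)"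
  define M2 where "M2 = (\<lambda>\<sigma>. if \<sigma> \<in> events G2 then evm G2 \<sigma> else unitm)"
  define P where "P = parcomp G1 G2"
  have mn: "0 < m" "0 < n" using assms(1,2) by (auto simp: is_bfa_def m_def n_def)
  have nstP: "nst P = m * n" by (simp add: P_def parcomp_def m_def n_def Let_def)
  have initP: "init P = tensor 1 n (init G1) (init G2)" by (simp add: P_def parcomp_def n_def Let_def)
  have evmP: "evm P \<sigma> = tensor n n (M1 \<sigma>) (M2 \<sigma>)" if "\<sigma> \<in> set s" for \<sigma>
    using that assms(3) by (auto simp: P_def parcomp_def n_def Let_def M1_def M2_def)
  have gu: "good (unitm i j)" for i j by (simp add: unitm_def good_s0 good_s1)
  have gM1: "good (M1 \<sigma> i j)" if "\<sigma> \<in> set s" "i < m" "j < m" for \<sigma> i j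
    using that assms(1,3) gu by (auto simp: M1_def is_bfa_def m_def intro: ncfd_good)
  have gM2: "good (M2 \<sigma> i j)" if "\<sigma> \<in> set s" "i < n" "j < n" for \<sigma> i j
    using that assms(2,3) gu by (auto simp: M2_def is_bfa_def n_def intro: ncfd_good)
  have gY: "good (init G1 0 a)" if "a < m" for a
    using that assms(1) by (auto simp: is_bfa_def m_def intro: ncfd_good)
  have gZ: "good (init G2 0 b)" if "b < n" for b
    using that assms(2) by (auto simp: is_bfa_def n_def intro: ncfd_good)
  have hX: "init P 0 c = fmeet (init G1 0 (c div n)) (init G2 0 (c mod n))" for c
    by (simp add: initP tensor_def)
  define Xs where "Xs = foldl (\<lambda>x \<sigma>. mcomp (m * n) x (tensor n n (M1 \<sigma>) (M2 \<sigma>))) (init P) s"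
  define Ys where "Ys = foldl (\<lambda>x \<sigma>. mcomp m x (M1 \<sigma>)) (init G1) s"
  define Zs where "Zs = foldl (\<lambda>x \<sigma>. mcomp n x (M2 \<sigma>)) (init G2) s"
  note inv = invariant[of s m M1 n M2 "init G1" "init G2" "init P", OF gM1 gM2 gY gZ hX,
      folded Xs_def Ys_def Zs_def]
  have ones: "onescol = tensor n n onescol onescol"
    by (simp add: onescol_def tensor_def top_top)
  have "lang P s = mcomp (m * n) Xs onescol 0 0"
    unfolding lang_def lang_with_def nstP Xs_def using False
    by (simp add: evmP cong: foldl_cong)
  also have "\<dots> = mcomp (m * n) Xs (tensor n n onescol onescol) 0 0"
    using ones by simp
  also have "\<dots> = fmeet (mcomp m Ys onescol 0 (0 div n)) (mcomp n Zs onescol 0 (0 mod n))"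
    by (rule step) (use inv mn in \<open>auto simp: onescol_def good_s1\<close>)
  also have "\<dots> = fmeet (lang_ext G1 s) (lang_ext G2 s)"
    using False by (simp add: lang_ext_def lang_with_def Ys_def Zs_def M1_def M2_def m_def n_def)
  finally show ?thesis by (simp add: P_def)
qed

end
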